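(* Let $\beta_t=b/(t+1)^{\tau_2}$ with $b>0$ and $0<\tau_2\le1$. Let $\{L_t\}$ be an i.i.d. sequence of random $N\times N$ graph Laplacians such that $L_t$ is $\mathcal{F}_{t+1}$-measurable and independent of $\mathcal{F}_t$ for all $t$, and $\lambda_2(\overline{L})=\lambda_2(\mathbb{E}[L_t])>0$. Let $\{\mathbf{z}_t\}$ be an $\mathbb{R}^{NM}$-valued $\{\mathcal{F}_t\}$-adapted process with $\mathbf{z}_t\in\mathcal{C}^\perp$ for all $t$. Then there exist a measurable $\{\mathcal{F}_{t+1}\}$-adapted $\mathbb{R}_+$-valued process $\{r_t\}$ (depending on $\{\mathbf{z}_t\}$ and $\{L_t\}$) and a constant $c_r>0$ such that $0\le r_t\le1$ almost surely, and such that for all $t$ large enough $$\|(I_{NM}-\beta_tL_t\otimes I_M)\mathbf{z}_t\|\le(1-r_t)\|\mathbf{z}_t\|$$ and $$\mathbb{E}[r_t\mid\mathcal{F}_t]\ge\frac{c_r}{(t+1)^{\tau_2}}\quad\text{a.s.}$$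
   Context: All processes are defined on a probability space with filtration $\{\mathcal{F}_t\}_{t\ge0}$. A graph Laplacian of a simple undirected graph on $\{1,\dots,N\}$ is $D-A$, where $A$ is the adjacency matrix and $D$ the diagonal degree matrix. $\lambda_2(\cdot)$ denotes the second smallest eigenvalue. The consensus subspace is $\mathcal{C}=\{\mathbf{1}_N\otimes\mathbf{a}:\mathbf{a}\in\mathbb{R}^M\}\subset\mathbb{R}^{NM}$, and $\mathcal{C}^\perp$ is its orthogonal complement. $\otimes$ is the Kronecker product and $\|\cdot\|$ the Euclidean norm. *)

theory Defs
  imports "HOL-Probability.Probability" "HOL-Computational_Algebra.Polynomial"
begin

definition is_graph_laplacian :: "real^'n^'n \<Rightarrow> bool" where
  "is_graph_laplacian L \<longleftrightarrow>
     (\<exists>A :: real^'n^'n.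
        (\<forall>i j. A $ i $ j = 0 \<or> A $ i $ j = 1) \<and>
        (\<forall>i j. A $ i $ j = A $ j $ i) \<and>
        (\<forall>i. A $ i $ i = 0) \<and>
        L = (\<chi> i j. (if i = j then (\<Sum>k\<in>UNIV. A $ i $ k) else 0) - A $ i $ j))"

definition charpoly :: "real^'n^'n \<Rightarrow> real poly" where
  "charpoly A = det (\<chi> i j. (if i = j then [:0, 1:] else 0) - [:A $ i $ j:])"

(* eigenvalues (real roots of the characteristic polynomial, with multiplicity),
   sorted increasingly; for symmetric matrices these are all eigenvalues *)
definition eigenvalues_sorted :: "real^'n^'n \<Rightarrow> real list" where
  "eigenvalues_sorted A = sorted_list_of_multiset (proots (charpoly A))"

definition lambda2 :: "real^'n^'n \<Rightarrow> real" where
  "lambda2 A = eigenvalues_sorted A ! 1"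

(* vectors in R^{NM} represented as N blocks of M-vectors: z $ i $ k = component (i,k).
   Kronecker action (L \<otimes> I_M) z *)
definition kron_apply :: "real^'n^'n \<Rightarrow> real^'m^'n \<Rightarrow> real^'m^'n" where
  "kron_apply L z = (\<chi> i. \<Sum>j\<in>UNIV. L $ i $ j *\<^sub>R z $ j)"

definition consensus :: "(real^'m^'n) set" where
  "consensus = {z. \<exists>a. \<forall>i. z $ i = a}"

definition consensus_perp :: "(real^'m^'n) set" where
  "consensus_perp = {z. \<forall>y\<in>consensus. inner z y = 0}"

end

theory Submission
  imports Defs
begin

lemma det_rowcomb:
  fixes Q :: "'a::comm_ring_1^'n^'n"
  shows "det (\<chi> i. if i = s then (\<Sum>k\<in>UNIV. x k *s row k Q) else row i Q) = x s * det Q"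
proof -
  have "det (\<chi> i. if i = s then (\<Sum>k\<in>UNIV. x k *s row k Q) else row i Q)
     = (\<Sum>k\<in>UNIV. det (\<chi> i. if i = s then x k *s row k Q else row i Q))"
    by (rule det_linear_row_sum) simp
  also have "\<dots> = (\<Sum>k\<in>UNIV. x k * det (\<chi> i. if i = s then row k Q else row i Q))"
    by (simp add: det_row_mul)
  also have "\<dots> = x s * det (\<chi> i. if i = s then row s Q else row i Q)"
  proof -
    have z: "(\<Sum>k\<in>UNIV - {s}. x k * det (\<chi> i. if i = s then row k Q else row i Q)) = 0"
    proof (rule sum.neutral, rule ballI)
      fix k assume "k \<in> UNIV - {s}"
      then have "k \<noteq> s" by simp
      then have "det (\<chi> i. if i = s then row k Q else row i Q) = 0"
        by (intro det_identical_rows[of s k]) (auto simp: row_def vec_eq_iff)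
      then show "x k * det (\<chi> i. if i = s then row k Q else row i Q) = 0" by simp
    qed
    show ?thesis using sum.remove[of UNIV s "\<lambda>k. x k * det (\<chi> i. if i = s then row k Q else row i Q)"] z
      by simp
  qed
  also have "(\<chi> i. if i = s then row s Q else row i Q) = Q"
    by (simp add: row_def vec_eq_iff)
  finally show ?thesis .
qed

lemma det_rowcomb_X:
  fixes Q :: "'a::comm_ring_1^'n^'n"
  assumes "(\<Sum>k\<in>UNIV. x k *s row k Q) = c *s y"
  shows "x s * det Q = c * det (\<chi> i. if i = s then y else row i Q)"
  using det_rowcomb[of s x Q] assms det_row_mul[of s c "\<lambda>_. y" "\<lambda>i. row i Q"] by metis

lemma sorted_count2:
  fixes xs :: "real list"
  assumes "sorted xs" "count (mset xs) 0 \<ge> 2"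
  shows "xs ! 1 \<le> 0"
proof (rule ccontr)
  assume neg: "\<not> xs ! 1 \<le> 0"
  show False
  proof (cases xs)
    case Nil then show ?thesis using assms by simp
  next
    case (Cons x ys)
    show ?thesis
    proof (cases ys)
      case Nil then show ?thesis using assms Cons by (auto split: if_splits)
    next
      case (Cons y zs)
      have "y > 0" using neg Cons \<open>xs = x # ys\<close> by simp
      have "\<forall>w\<in>set zs. y \<le> w" using assms(1) Cons \<open>xs = x # ys\<close> by simp
      then have "0 \<notin> set zs" using \<open>y > 0\<close> by force
      then have c0: "count (mset zs) 0 = 0" by (simp add: count_eq_zero_iff)
      have "count (mset xs) 0 = (if x = 0 then 1 else 0) + (if y = 0 then 1 else 0) + count (mset zs) 0"
        using Cons \<open>xs = x # ys\<close> by simp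
      then have "count (mset xs) 0 \<le> 1" using c0 \<open>y > 0\<close> by simp
      then show ?thesis using assms(2) by linarith
    qed
  qed
qed

definition charmat :: "real^'n^'n \<Rightarrow> real poly^'n^'n" where
  "charmat A = (\<chi> i j. (if i = j then [:0, 1:] else 0) - [:A $ i $ j:])"

lemma charpoly_charmat: "charpoly A = det (charmat A)"
  by (simp add: charpoly_def charmat_def)

lemma const_poly_sum: "(\<Sum>k\<in>S. [:f k:]) = [:(\<Sum>k\<in>S. f k)::'a::comm_ring_1:]"
  using smult_sum[of f S 1] by (simp add: smult_one)

lemma rowcomb_charmat:
  fixes A :: "real^'n^'n"
  assumes sym: "\<And>i j. A $ i $ j = A $ j $ i" and ker: "A *v x = 0"
  shows "(\<Sum>k\<in>UNIV. [:x $ k:] *s row k (charmat A)) = [:0,1:] *s (\<chi> j. [:x $ j:])"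
proof (unfold vec_eq_iff, rule allI)
  fix j
  have "(\<Sum>k\<in>UNIV. [:x $ k:] *s row k (charmat A)) $ j
      = (\<Sum>k\<in>UNIV. [:x $ k:] * ((if k = j then [:0, 1:] else 0) - [:A $ k $ j:]))"
    by (simp add: sum_component row_def charmat_def)
  also have "\<dots> = (\<Sum>k\<in>UNIV. (if k = j then [:x $ k:] * [:0, 1:] else 0)) - (\<Sum>k\<in>UNIV. [:x $ k * A $ k $ j:])"
  proof -
    have "\<And>k. [:x $ k:] * ((if k = j then [:0, 1:] else 0) - [:A $ k $ j:])
        = (if k = j then [:x $ k:] * [:0, 1:] else 0) - [:x $ k * A $ k $ j:]"
      by (simp add: right_diff_distrib)
    then show ?thesis by (simp only: sum_subtractf)
  qed
  also have "(\<Sum>k\<in>UNIV. [:x $ k * A $ k $ j:]) = [:\<Sum>k\<in>UNIV. A $ j $ k * x $ k:]"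
    by (simp add: const_poly_sum sym mult.commute)
  also have "(\<Sum>k\<in>UNIV. A $ j $ k * x $ k) = 0"
    using ker by (simp add: matrix_vector_mult_def vec_eq_iff)
  finally show "(\<Sum>k\<in>UNIV. [:x $ k:] *s row k (charmat A)) $ j = ([:0,1:] *s (\<chi> j. [:x $ j:])) $ j"
    by (simp add: mult.commute)
qed

lemma kernel_two_dvd:
  fixes A :: "real^'n^'n" and v :: "real^'n"
  assumes sym: "\<And>i j. A $ i $ j = A $ j $ i" and one: "A *v (\<chi> i. 1) = 0"
    and kv: "A *v v = 0" and sv: "sum (\<lambda>i. v $ i) UNIV = 0" and vnz: "v \<noteq> 0"
  shows "[:0,1:]^2 dvd charpoly A"
proof -
  obtain p where vp: "v $ p \<noteq> 0" using vnz by (metis vec_eq_iff zero_index)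
  define w where "w = v - (v $ p) *\<^sub>R (\<chi> i. 1)"
  have wp: "w $ p = 0" by (simp add: w_def)
  have kw: "A *v w = 0" using kv one by (simp add: w_def matrix_vector_mult_diff_distrib matrix_vector_mult_scaleR)
  have "w \<noteq> 0"
  proof
    assume "w = 0"
    then have "\<forall>i. v $ i = v $ p" by (simp add: w_def vec_eq_iff)
    then have "sum (\<lambda>i. v $ i) UNIV = sum (\<lambda>i. v $ p) (UNIV::'n set)"
      using sum.cong[OF refl, of UNIV "\<lambda>i. v $ i" "\<lambda>i. v $ p"] by blast
    then have "sum (\<lambda>i. v $ i) UNIV = of_nat CARD('n) * v $ p" by simp
    then show False using sv vp by simp
  qed
  then obtain s where ws: "w $ s \<noteq> 0" by (metis vec_eq_iff zero_index)
  let ?Q = "charmat A"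
  let ?Q2 = "(\<chi> i. if i = p then (\<chi> j. [:((\<chi> i. 1)::real^'n) $ j:]) else row i ?Q) :: real poly^'n^'n"
  have e1: "(\<Sum>k\<in>UNIV. [:((\<chi> i. 1)::real^'n) $ k:] *s row k ?Q) = [:0,1:] *s (\<chi> j. [:((\<chi> i. 1)::real^'n) $ j:])"
    by (rule rowcomb_charmat[OF sym one])
  have d1: "[:((\<chi> i. 1)::real^'n) $ p:] * det ?Q = [:0,1:] * det ?Q2"
    by (rule det_rowcomb_X[OF e1, of p])
  have e2: "(\<Sum>k\<in>UNIV. [:w $ k:] *s row k ?Q2) = [:0,1:] *s (\<chi> j. [:w $ j:])"
  proof -
    have "(\<Sum>k\<in>UNIV. [:w $ k:] *s row k ?Q2) = (\<Sum>k\<in>UNIV. [:w $ k:] *s row k ?Q)"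
      by (rule sum.cong) (auto simp: row_def wp vec_eq_iff)
    then show ?thesis using rowcomb_charmat[OF sym kw] by simp
  qed
  have d2: "[:w $ s:] * det ?Q2 = [:0,1:] * det (\<chi> i. if i = s then (\<chi> j. [:w $ j:]) else row i ?Q2)"
    by (rule det_rowcomb_X[OF e2])
  have "smult (w $ s) (charpoly A) = [:0,1:]^2 * det (\<chi> i. if i = s then (\<chi> j. [:w $ j:]) else row i ?Q2)"
  proof -
    have d1': "det ?Q = [:0,1:] * det ?Q2" using d1 by simp
    have "smult (w $ s) (charpoly A) = [:w $ s:] * det ?Q" by (simp add: charpoly_charmat)
    also have "\<dots> = [:0,1:] * ([:w $ s:] * det ?Q2)" using d1' by (simp only: mult.left_commute)
    also have "\<dots> = [:0,1:]^2 * det (\<chi> i. if i = s then (\<chi> j. [:w $ j:]) else row i ?Q2)"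
      using d2 by (simp add: power2_eq_square)
    finally show ?thesis .
  qed
  then have "[:0,1:]^2 dvd smult (w $ s) (charpoly A)" by simp
  then show ?thesis using ws dvd_smult_cancel by blast
qed

lemma lap_form:
  fixes A :: "real^'n^'n" and z :: "'n \<Rightarrow> 'v::real_inner"
  assumes sym: "\<And>i j. A $ i $ j = A $ j $ i" and rs: "\<And>i. (\<Sum>j\<in>UNIV. A $ i $ j) = 0"
  shows "(\<Sum>i\<in>UNIV. inner (z i) (\<Sum>j\<in>UNIV. A $ i $ j *\<^sub>R z j))
       = -(1/2) * (\<Sum>i\<in>UNIV. \<Sum>j\<in>UNIV. A $ i $ j * (norm (z i - z j))^2)"
proof -
  have r1: "(\<Sum>j\<in>UNIV. A $ i $ j *\<^sub>R z j) = (\<Sum>j\<in>UNIV. A $ i $ j *\<^sub>R (z j - z i))" for i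
  proof -
    have "(\<Sum>j\<in>UNIV. A $ i $ j *\<^sub>R (z j - z i)) = (\<Sum>j\<in>UNIV. A $ i $ j *\<^sub>R z j) - (\<Sum>j\<in>UNIV. A $ i $ j) *\<^sub>R z i"
      by (simp add: scaleR_diff_right sum_subtractf scaleR_sum_left)
    then show ?thesis using rs[of i] by simp
  qed
  define S where "S = (\<Sum>i\<in>UNIV. \<Sum>j\<in>UNIV. A $ i $ j * inner (z i) (z j - z i))"
  have L: "(\<Sum>i\<in>UNIV. inner (z i) (\<Sum>j\<in>UNIV. A $ i $ j *\<^sub>R z j)) = S"
    unfolding S_def r1 by (simp add: inner_sum_right)
  have S2: "S = (\<Sum>i\<in>UNIV. \<Sum>j\<in>UNIV. A $ i $ j * inner (z j) (z i - z j))"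
    unfolding S_def by (subst sum.swap) (simp add: sym)
  have "2 * S = (\<Sum>i\<in>UNIV. \<Sum>j\<in>UNIV. A $ i $ j * (inner (z i) (z j - z i) + inner (z j) (z i - z j)))"
    using S2 unfolding S_def by (simp add: distrib_left sum.distrib)
  also have "\<dots> = (\<Sum>i\<in>UNIV. \<Sum>j\<in>UNIV. - (A $ i $ j * (norm (z i - z j))^2))"
    by (intro sum.cong refl) (simp add: power2_norm_eq_inner inner_diff_left inner_diff_right inner_commute algebra_simps)
  finally have "2 * S = - (\<Sum>i\<in>UNIV. \<Sum>j\<in>UNIV. A $ i $ j * (norm (z i - z j))^2)"
    by (simp add: sum_negf)
  then show ?thesis using L by simp
qed

lemma lap_form_nonneg:
  fixes A :: "real^'n^'n" and z :: "'n \<Rightarrow> 'v::real_inner"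
  assumes sym: "\<And>i j. A $ i $ j = A $ j $ i" and rs: "\<And>i. (\<Sum>j\<in>UNIV. A $ i $ j) = 0"
    and off: "\<And>i j. i \<noteq> j \<Longrightarrow> A $ i $ j \<le> 0"
  shows "(\<Sum>i\<in>UNIV. inner (z i) (\<Sum>j\<in>UNIV. A $ i $ j *\<^sub>R z j)) \<ge> 0"
proof -
  have "A $ i $ j * (norm (z i - z j))^2 \<le> 0" for i j
    using off[of i j] by (cases "i = j") (auto simp: mult_nonpos_nonneg)
  then have "(\<Sum>i\<in>UNIV. \<Sum>j\<in>UNIV. A $ i $ j * (norm (z i - z j))^2) \<le> 0"
    by (intro sum_nonpos) auto
  then show ?thesis unfolding lap_form[OF sym rs] by simp
qed

lemma inner_mv: "inner (x::real^'n) (A *v x) = (\<Sum>i\<in>UNIV. inner (x $ i) (\<Sum>j\<in>UNIV. A $ i $ j *\<^sub>R x $ j))"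
  by (simp add: inner_vec_def matrix_vector_mult_def)

lemma inner_kron: "inner z (kron_apply A z) = (\<Sum>i\<in>UNIV. inner (z $ i) (\<Sum>j\<in>UNIV. A $ i $ j *\<^sub>R z $ j))"
  by (simp add: inner_vec_def kron_apply_def)

lemma poly_det: "poly (det Q) x = det (\<chi> i j. poly (Q $ i $ j) x)"
  by (simp add: det_def poly_sum poly_prod)

lemma charpoly_nz:
  fixes A :: "real^'n^'n"
  assumes psd: "\<And>x. inner x (A *v x) \<ge> 0"
  shows "charpoly A \<noteq> 0"
proof
  assume "charpoly A = 0"
  then have "poly (charpoly A) (-1) = 0" by simp
  then have d: "det ((\<chi> i j. (if i = j then -1 else 0) - A $ i $ j)::real^'n^'n) = 0"
  proof -
    have "(\<chi> i j. poly ((\<chi> i j. (if i = j then [:0, 1:] else 0) - [:A $ i $ j:]) $ i $ j) (-1))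
        = ((\<chi> i j. (if i = j then -1 else 0) - A $ i $ j)::real^'n^'n)"
      by (simp add: vec_eq_iff)
    then show ?thesis using \<open>poly (charpoly A) (-1) = 0\<close> by (simp only: charpoly_def poly_det)
  qed
  let ?B = "(\<chi> i j. (if i = j then -1 else 0) - A $ i $ j)::real^'n^'n"
  have "\<not> invertible ?B" using d invertible_det_nz by blast
  then have "\<not> (\<forall>x. ?B *v x = 0 \<longrightarrow> x = 0)"
    using matrix_left_invertible_ker invertible_left_inverse by blast
  then obtain x where x: "?B *v x = 0" "x \<noteq> 0" by blast
  have e: "\<And>i j. ((if i = j then -1 else 0) - A$i$j) * x$j = (if i = j then - x$j else 0) - A$i$j * x$j"
    by (auto simp: algebra_simps)
  have "?B *v x = - x - A *v x"
    by (simp add: vec_eq_iff matrix_vector_mult_def e sum_subtractf)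
  then have "A *v x = - x" using x(1) by (simp add: algebra_simps)
  then have "inner x (A *v x) = - inner x x" by simp
  then show False using psd[of x] x(2) inner_gt_zero_iff[of x] by linarith
qed

lemma lambda2_kernel:
  fixes A :: "real^'n^'n" and v :: "real^'n"
  assumes sym: "\<And>i j. A $ i $ j = A $ j $ i" and one: "A *v (\<chi> i. 1) = 0"
    and nz: "charpoly A \<noteq> 0" and l2: "lambda2 A > 0"
    and kv: "A *v v = 0" and sv: "sum (\<lambda>i. v $ i) UNIV = 0"
  shows "v = 0"
proof (rule ccontr)
  assume "v \<noteq> 0"
  then have "[:0,1:]^2 dvd charpoly A" using kernel_two_dvd[OF sym one kv sv] by blast
  then have "2 \<le> order 0 (charpoly A)" using order_divides[of 0 2 "charpoly A"] nz by simp
  then have "2 \<le> count (proots (charpoly A)) 0" using nz by simp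
  then have "2 \<le> count (mset (eigenvalues_sorted A)) 0"
    by (simp add: eigenvalues_sorted_def)
  then have "eigenvalues_sorted A ! 1 \<le> 0"
    by (intro sorted_count2) (auto simp: eigenvalues_sorted_def)
  then show False using l2 by (simp add: lambda2_def)
qed

lemma perp_sum:
  assumes "z \<in> consensus_perp"
  shows "(\<Sum>i\<in>UNIV. z $ i) = 0"
proof -
  let ?a = "(\<Sum>i\<in>UNIV. z $ i)"
  have "(\<chi> i. ?a) \<in> consensus" by (auto simp: consensus_def)
  then have "inner z (\<chi> i. ?a) = 0" using assms by (auto simp: consensus_perp_def)
  moreover have "inner z (\<chi> i. ?a) = (\<Sum>i\<in>UNIV. inner (z $ i) ?a)"
    by (subst inner_vec_def) simp
  moreover have "(\<Sum>i\<in>UNIV. inner (z $ i) ?a) = inner ?a ?a"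
    by (rule inner_sum_left[symmetric])
  ultimately have "inner ?a ?a = 0" by simp
  then show ?thesis by simp
qed

lemma kron_scale: "kron_apply A (c *\<^sub>R z) = c *\<^sub>R kron_apply A z"
  by (simp add: kron_apply_def vec_eq_iff scaleR_sum_right sum_distrib_left mult_ac)

lemma sum_nonpos_zero:
  fixes f :: "'i \<Rightarrow> real"
  assumes "finite I" "\<And>i. i \<in> I \<Longrightarrow> f i \<le> 0" "sum f I = 0" "i \<in> I"
  shows "f i = 0"
proof -
  have "sum (\<lambda>i. - f i) I = 0" using assms(3) by (simp add: sum_negf)
  then have "\<forall>i\<in>I. - f i = 0" using sum_nonneg_eq_0_iff[of I "\<lambda>i. - f i"] assms by auto
  then show ?thesis using assms(4) by simp
qed

lemma form_pos:
  fixes A :: "real^'n^'n" and z :: "real^'m^'n"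
  assumes sym: "\<And>i j. A $ i $ j = A $ j $ i" and rs: "\<And>i. (\<Sum>j\<in>UNIV. A $ i $ j) = 0"
    and off: "\<And>i j. i \<noteq> j \<Longrightarrow> A $ i $ j \<le> 0" and l2: "lambda2 A > 0"
    and zs: "(\<Sum>i\<in>UNIV. z $ i) = 0" and znz: "z \<noteq> 0"
  shows "inner z (kron_apply A z) > 0"
proof (rule ccontr)
  assume "\<not> inner z (kron_apply A z) > 0"
  moreover have "inner z (kron_apply A z) \<ge> 0"
    unfolding inner_kron by (rule lap_form_nonneg[OF sym rs off])
  ultimately have "inner z (kron_apply A z) = 0" by simp
  then have s0: "(\<Sum>i\<in>UNIV. \<Sum>j\<in>UNIV. A $ i $ j * (norm (z $ i - z $ j))^2) = 0"
    unfolding inner_kron lap_form[OF sym rs] by simp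
  have tn: "A $ i $ j * (norm (z $ i - z $ j))^2 \<le> 0" for i j
    using off[of i j] by (cases "i = j") (auto simp: mult_nonpos_nonneg)
  have s1: "(\<Sum>j\<in>UNIV. A $ i $ j * (norm (z $ i - z $ j))^2) = 0" for i
    by (rule sum_nonpos_zero[OF _ _ s0]) (auto intro: sum_nonpos tn)
  have t0: "A $ i $ j * (norm (z $ i - z $ j))^2 = 0" for i j
    by (rule sum_nonpos_zero[OF _ _ s1[of i]]) (auto intro: tn)
  have eq: "A $ i $ j = 0 \<or> z $ i = z $ j" for i j using t0[of i j] by auto
  obtain i0 k where nz: "z $ i0 $ k \<noteq> 0" using znz by (metis vec_eq_iff zero_index)
  define v where "v = (\<chi> i. z $ i $ k)"
  have psd: "\<And>x. inner x (A *v x) \<ge> 0"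
    unfolding inner_mv by (rule lap_form_nonneg[OF sym rs off])
  have one: "A *v (\<chi> i. 1) = 0"
    using rs by (simp add: vec_eq_iff matrix_vector_mult_def)
  have kv: "A *v v = 0"
  proof -
    have "(\<Sum>j\<in>UNIV. A $ i $ j * v $ j) = 0" for i
    proof -
      have "(\<Sum>j\<in>UNIV. A $ i $ j * v $ j) = (\<Sum>j\<in>UNIV. A $ i $ j * v $ i)"
      proof (rule sum.cong[OF refl])
        fix j show "A $ i $ j * v $ j = A $ i $ j * v $ i"
          using eq[of i j] by (auto simp: v_def)
      qed
      also have "\<dots> = (\<Sum>j\<in>UNIV. A $ i $ j) * v $ i" by (simp add: sum_distrib_right)
      finally show ?thesis using rs[of i] by simp
    qed
    then show ?thesis by (simp add: vec_eq_iff matrix_vector_mult_def)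
  qed
  have sv: "sum (\<lambda>i. v $ i) UNIV = 0"
  proof -
    have "sum (\<lambda>i. v $ i) UNIV = (\<Sum>i\<in>UNIV. z $ i) $ k" by (simp add: v_def sum_component)
    then show ?thesis using zs by simp
  qed
  have "v = 0" by (rule lambda2_kernel[OF sym one charpoly_nz[OF psd] l2 kv sv])
  then show False using nz by (simp add: v_def vec_eq_iff)
qed

lemma form_coercive:
  fixes A :: "real^'n^'n"
  assumes sym: "\<And>i j. A $ i $ j = A $ j $ i" and rs: "\<And>i. (\<Sum>j\<in>UNIV. A $ i $ j) = 0"
    and off: "\<And>i j. i \<noteq> j \<Longrightarrow> A $ i $ j \<le> 0" and l2: "lambda2 A > 0"
  shows "\<exists>c>0. \<forall>z::real^'m^'n. (\<Sum>i\<in>UNIV. z $ i) = 0 \<longrightarrow> c * (norm z)^2 \<le> inner z (kron_apply A z)"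
proof -
  define S where "S = {z::real^'m^'n. (\<Sum>i\<in>UNIV. z $ i) = 0 \<and> norm z = 1}"
  define f where "f = (\<lambda>z::real^'m^'n. inner z (kron_apply A z))"
  have fq: "f (c *\<^sub>R z) = c^2 * f z" for c z
    by (simp add: f_def kron_scale power2_eq_square)
  have key: "\<exists>c>0. \<forall>u\<in>S. c \<le> f u"
  proof (cases "S = {}")
    case True then show ?thesis by (auto intro: exI[of _ 1])
  next
    case False
    have cl: "closed S"
    proof -
      have "closed {z::real^'m^'n. (\<Sum>i\<in>UNIV. z $ i) = 0}"
        by (intro closed_Collect_eq continuous_intros)
      moreover have "closed {z::real^'m^'n. norm z = 1}"
        by (intro closed_Collect_eq continuous_intros)
      ultimately show ?thesis unfolding S_def by (simp add: Collect_conj_eq closed_Int)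
    qed
    have bd: "bounded S" unfolding S_def by (rule boundedI[of _ 1]) auto
    have "compact S" using cl bd by (simp add: compact_eq_bounded_closed)
    moreover have "continuous_on S f"
      unfolding f_def inner_kron by (intro continuous_intros)
    ultimately obtain u0 where u0: "u0 \<in> S" "\<forall>u\<in>S. f u0 \<le> f u"
      using continuous_attains_inf[of S f] False by blast
    have "f u0 > 0" unfolding f_def
      using u0(1) by (intro form_pos[OF sym rs off l2]) (auto simp: S_def)
    then show ?thesis using u0 by blast
  qed
  then obtain c where c: "c > 0" "\<forall>u\<in>S. c \<le> f u" by blast
  have "c * (norm z)^2 \<le> f z" if zs: "(\<Sum>i\<in>UNIV. z $ i) = 0" for z :: "real^'m^'n"
  proof (cases "z = 0")
    case True then show ?thesis by (simp add: f_def kron_apply_def)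
  next
    case False
    let ?u = "(1 / norm z) *\<^sub>R z"
    have "?u \<in> S" using zs False by (simp add: S_def scaleR_sum_right[symmetric])
    then have "c \<le> f ?u" using c by blast
    also have "f ?u = f z / (norm z)^2" by (simp add: fq power_divide)
    finally show ?thesis using False by (simp add: pos_le_divide_eq)
  qed
  then show ?thesis using c(1) unfolding f_def by blast
qed

lemma lap_props:
  fixes L :: "real^'n^'n"
  assumes "is_graph_laplacian L"
  shows "\<And>i j. L $ i $ j = L $ j $ i" "\<And>i. (\<Sum>j\<in>UNIV. L $ i $ j) = 0"
    "\<And>i j. i \<noteq> j \<Longrightarrow> L $ i $ j = 0 \<or> L $ i $ j = -1"
    "\<And>i j. \<bar>L $ i $ j\<bar> \<le> real CARD('n)"
proof -
  obtain A :: "real^'n^'n" where A: "\<forall>i j. A $ i $ j = 0 \<or> A $ i $ j = 1" "\<forall>i j. A $ i $ j = A $ j $ i"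
    "\<forall>i. A $ i $ i = 0"
    and LA: "L = (\<chi> i j. (if i = j then (\<Sum>k\<in>UNIV. A $ i $ k) else 0) - A $ i $ j)"
    using assms unfolding is_graph_laplacian_def by blast
  show "L $ i $ j = L $ j $ i" for i j using A(2) by (simp add: LA)
  show "(\<Sum>j\<in>UNIV. L $ i $ j) = 0" for i
  proof -
    have e: "\<And>j. L $ i $ j = (if i = j then (\<Sum>k\<in>UNIV. A $ i $ k) else 0) - A $ i $ j"
      by (simp add: LA)
    show ?thesis by (simp only: e sum_subtractf) simp
  qed
  show "i \<noteq> j \<Longrightarrow> L $ i $ j = 0 \<or> L $ i $ j = -1" for i j using A(1) by (auto simp: LA)
  show "\<bar>L $ i $ j\<bar> \<le> real CARD('n)" for i j
  proof (cases "i = j")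
    case True
    have "0 \<le> (\<Sum>k\<in>UNIV. A $ i $ k)" using A(1) by (intro sum_nonneg) (metis order_refl zero_le_one)
    moreover have "(\<Sum>k\<in>UNIV. A $ i $ k) \<le> (\<Sum>k\<in>(UNIV::'n set). 1)"
      using A(1) by (intro sum_mono) (metis order_refl zero_le_one)
    ultimately show ?thesis using True A(3) by (simp add: LA)
  next
    case False
    have "1 \<le> real CARD('n)" by simp
    then show ?thesis using False A(1)[rule_format, of i j] by (auto simp: LA)
  qed
qed

lemma norm2_vec: "(norm (x::real^'m^'n))^2 = (\<Sum>i\<in>UNIV. (norm (x $ i))^2)"
  by (simp add: power2_norm_eq_inner inner_vec_def[of x x])

lemma lap_kron_bound:
  fixes L :: "real^'n^'n" and z :: "real^'m^'n"
  assumes lap: "is_graph_laplacian L"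
  shows "(norm (kron_apply L z))^2 \<le> 2 * real CARD('n) * inner z (kron_apply L z)"
proof -
  note P = lap_props[OF lap]
  define w where "w i j = (if i = j then 0 else - L $ i $ j)" for i j
  have w01: "w i j = 0 \<or> w i j = 1" for i j using P(3)[of i j] by (auto simp: w_def)
  define d where "d i j = norm (z $ i - z $ j)" for i j
  have row: "kron_apply L z $ i = (\<Sum>j\<in>UNIV. w i j *\<^sub>R (z $ i - z $ j))" for i
  proof -
    have "(\<Sum>j\<in>UNIV. w i j *\<^sub>R (z $ i - z $ j)) = (\<Sum>j\<in>UNIV. L $ i $ j *\<^sub>R (z $ j - z $ i))"
      by (rule sum.cong) (auto simp: w_def scaleR_diff_right)
    also have "\<dots> = (\<Sum>j\<in>UNIV. L $ i $ j *\<^sub>R z $ j) - (\<Sum>j\<in>UNIV. L $ i $ j) *\<^sub>R z $ i"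
      by (simp add: scaleR_diff_right sum_subtractf scaleR_sum_left)
    finally show ?thesis using P(2)[of i] by (simp add: kron_apply_def)
  qed
  have bi: "(norm (kron_apply L z $ i))^2 \<le> real CARD('n) * (\<Sum>j\<in>UNIV. - L $ i $ j * (d i j)^2)" for i
  proof -
    have "norm (kron_apply L z $ i) \<le> (\<Sum>j\<in>UNIV. w i j * d i j)"
      unfolding row d_def
    proof (rule order_trans[OF norm_sum], rule sum_mono)
      fix j show "norm (w i j *\<^sub>R (z $ i - z $ j)) \<le> w i j * norm (z $ i - z $ j)"
        using w01[of i j] by auto
    qed
    then have "(norm (kron_apply L z $ i))^2 \<le> (\<Sum>j\<in>UNIV. w i j * d i j)^2"
      by (intro power_mono) auto
    also have "\<dots> \<le> (\<Sum>j\<in>UNIV. (w i j * d i j)^2) * real CARD('n)"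
      by (rule sum_squared_le_sum_of_squares)
    also have "(\<Sum>j\<in>UNIV. (w i j * d i j)^2) = (\<Sum>j\<in>UNIV. - L $ i $ j * (d i j)^2)"
    proof (rule sum.cong[OF refl])
      fix j show "(w i j * d i j)^2 = - L $ i $ j * (d i j)^2"
        using w01[of i j] by (cases "i = j") (auto simp: w_def d_def power_mult_distrib)
    qed
    finally show ?thesis by (simp add: mult.commute)
  qed
  have "(norm (kron_apply L z))^2 = (\<Sum>i\<in>UNIV. (norm (kron_apply L z $ i))^2)" by (rule norm2_vec)
  also have "\<dots> \<le> (\<Sum>i\<in>UNIV. real CARD('n) * (\<Sum>j\<in>UNIV. - L $ i $ j * (d i j)^2))"
    by (rule sum_mono) (rule bi)
  also have "\<dots> = real CARD('n) * (- (\<Sum>i\<in>UNIV. \<Sum>j\<in>UNIV. L $ i $ j * (d i j)^2))"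
    by (simp add: sum_distrib_left sum_negf)
  also have "- (\<Sum>i\<in>UNIV. \<Sum>j\<in>UNIV. L $ i $ j * (d i j)^2) = 2 * inner z (kron_apply L z)"
    unfolding inner_kron lap_form[OF P(1) P(2)] d_def by simp
  finally show ?thesis by simp
qed

lemma lap_form_nonneg':
  fixes L :: "real^'n^'n" and z :: "real^'m^'n"
  assumes lap: "is_graph_laplacian L"
  shows "inner z (kron_apply L z) \<ge> 0"
proof -
  note P = lap_props[OF lap]
  have "\<And>i j. i \<noteq> j \<Longrightarrow> L $ i $ j \<le> 0" using P(3) by fastforce
  then show ?thesis unfolding inner_kron by (rule lap_form_nonneg[OF P(1) P(2)])
qed

lemma lap_contract:
  fixes L :: "real^'n^'n" and z :: "real^'m^'n"
  assumes lap: "is_graph_laplacian L" and b0: "0 \<le> \<beta>" and b1: "2 * real CARD('n) * \<beta> \<le> 1"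
    and znz: "z \<noteq> 0"
  defines "q \<equiv> \<beta> / 2 * inner z (kron_apply L z) / (norm z)^2"
  shows "norm (z - \<beta> *\<^sub>R kron_apply L z) \<le> (1 - q) * norm z" "0 \<le> q" "q \<le> 1/2"
proof -
  let ?Q = "inner z (kron_apply L z)"
  let ?N = "real CARD('n)"
  have Q0: "?Q \<ge> 0" by (rule lap_form_nonneg'[OF lap])
  have KB: "(norm (kron_apply L z))^2 \<le> 2 * ?N * ?Q" by (rule lap_kron_bound[OF lap])
  have nz: "(norm z)^2 > 0" using znz by simp
  have "(norm (z - \<beta> *\<^sub>R kron_apply L z))^2 = (norm z)^2 - 2 * \<beta> * ?Q + \<beta>^2 * (norm (kron_apply L z))^2"
    unfolding power2_norm_eq_inner by (simp add: inner_diff_left inner_diff_right inner_commute algebra_simps power2_eq_square)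
  also have "\<dots> \<le> (norm z)^2 - 2 * \<beta> * ?Q + \<beta>^2 * (2 * ?N * ?Q)"
    using KB by (intro add_left_mono mult_left_mono) auto
  also have "\<dots> \<le> (norm z)^2 - \<beta> * ?Q"
  proof -
    have "\<beta>^2 * (2 * ?N * ?Q) = (2 * ?N * \<beta>) * (\<beta> * ?Q)" by (simp add: power2_eq_square algebra_simps)
    also have "\<dots> \<le> 1 * (\<beta> * ?Q)" using b1 b0 Q0 by (intro mult_right_mono) auto
    finally show ?thesis by simp
  qed
  finally have E: "(norm (z - \<beta> *\<^sub>R kron_apply L z))^2 \<le> (norm z)^2 - \<beta> * ?Q" .
  have bq: "\<beta> * ?Q \<le> (norm z)^2" using E by (smt (verit) zero_le_power2)
  have q_eq: "q = \<beta> * ?Q / (2 * (norm z)^2)" by (simp add: q_def)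
  show "0 \<le> q" unfolding q_eq using b0 Q0 by simp
  show "q \<le> 1/2" unfolding q_eq using bq nz by (simp add: divide_le_eq)
  have "(norm z)^2 - \<beta> * ?Q = (norm z)^2 * (1 - 2 * q)" using nz by (simp add: q_eq field_simps)
  also have "\<dots> \<le> (norm z)^2 * (1 - q)^2"
    using nz by (intro mult_left_mono) (auto simp: power2_eq_square algebra_simps)
  also have "\<dots> = ((1 - q) * norm z)^2" by (simp add: power_mult_distrib)
  finally have "(norm (z - \<beta> *\<^sub>R kron_apply L z))^2 \<le> ((1 - q) * norm z)^2" using E by linarith
  then show "norm (z - \<beta> *\<^sub>R kron_apply L z) \<le> (1 - q) * norm z"
    by (rule power2_le_imp_le) (use \<open>q \<le> 1/2\<close> in simp)
qed


lemma nth2_meas: "(\<lambda>x::real^'n^'m. x $ i $ j) \<in> borel_measurable borel"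
  by (intro borel_measurable_continuous_onI continuous_intros)

lemma indep_set_mono:
  assumes "prob_space M" "prob_space.indep_set M A B" "A' \<subseteq> A" "B' \<subseteq> B"
  shows "prob_space.indep_set M A' B'"
proof -
  interpret prob_space M by (rule assms(1))
  show ?thesis using assms(2-4) unfolding indep_sets2_eq by blast
qed

lemma indep_cond_exp:
  fixes X :: "'a \<Rightarrow> 'b::topological_space" and g :: "'b \<Rightarrow> real"
  assumes P: "prob_space M" and sub: "subalgebra M Ft"
    and ind: "prob_space.indep_set M (sets Ft) (sets (vimage_algebra (space M) X borel))"
    and Xm: "X \<in> borel_measurable M" and gm: "g \<in> borel_measurable borel"
    and int: "integrable M (\<lambda>\<omega>. g (X \<omega>))"
  shows "AE \<omega> in M. real_cond_exp M Ft (\<lambda>\<omega>. g (X \<omega>)) \<omega> = integral\<^sup>L M (\<lambda>\<omega>. g (X \<omega>))"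
proof -
  interpret prob_space M by (rule P)
  have fms: "finite_measure_subalgebra M Ft"
    unfolding finite_measure_subalgebra_def finite_measure_subalgebra_axioms_def
    using sub finite_measure_axioms by auto
  interpret sigma_finite_subalgebra M Ft
    by (rule finite_measure_subalgebra_is_sigma_finite[OF fms])
  have spF: "space Ft = space M" using sub by (simp add: subalgebra_def)
  have gX: "(\<lambda>\<omega>. g (X \<omega>)) \<in> borel_measurable M" using Xm gm by measurable
  show ?thesis
  proof (rule real_cond_exp_charact)
    fix A assume A: "A \<in> sets Ft"
    then have AM: "A \<in> sets M" using sub by (auto simp: subalgebra_def)
    have iv: "indep_var borel (indicator A) borel (\<lambda>\<omega>. g (X \<omega>))"
    proof (subst indep_var_eq, intro conjI)
      show "random_variable borel (indicator A :: 'a \<Rightarrow> real)" using AM by (rule borel_measurable_indicator)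
      show "random_variable borel (\<lambda>\<omega>. g (X \<omega>))" by (rule gX)
      show "indep_set (sigma_sets (space M) {(indicator A :: 'a \<Rightarrow> real) -` B \<inter> space M |B. B \<in> sets borel})
          (sigma_sets (space M) {(\<lambda>\<omega>. g (X \<omega>)) -` B \<inter> space M |B. B \<in> sets borel})"
      proof (rule indep_set_mono[OF P ind])
        have "{(indicator A :: 'a \<Rightarrow> real) -` B \<inter> space M |B. B \<in> sets borel} \<subseteq> sets Ft"
        proof safe
          fix B :: "real set" assume "B \<in> sets borel"
          moreover have "(indicator A :: 'a \<Rightarrow> real) \<in> borel_measurable Ft" using A by simp
          ultimately show "indicator A -` B \<inter> space M \<in> sets Ft"
            using measurable_sets[of "indicator A :: 'a \<Rightarrow> real" Ft borel B] spF by simp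
        qed
        then show "sigma_sets (space M) {(indicator A :: 'a \<Rightarrow> real) -` B \<inter> space M |B. B \<in> sets borel} \<subseteq> sets Ft"
          using sets.sigma_sets_subset[of _ Ft] spF by simp
        have "{(\<lambda>\<omega>. g (X \<omega>)) -` B \<inter> space M |B. B \<in> sets borel} \<subseteq> sets (vimage_algebra (space M) X borel)"
        proof safe
          fix B :: "real set" assume "B \<in> sets borel"
          then have "g -` B \<in> sets borel" using measurable_sets[OF gm, of B] by simp
          then have "X -` (g -` B) \<inter> space M \<in> sets (vimage_algebra (space M) X borel)"
            by (rule in_vimage_algebra)
          then show "(\<lambda>\<omega>. g (X \<omega>)) -` B \<inter> space M \<in> sets (vimage_algebra (space M) X borel)"
            by (simp add: vimage_def)
        qed
        then show "sigma_sets (space M) {(\<lambda>\<omega>. g (X \<omega>)) -` B \<inter> space M |B. B \<in> sets borel}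
            \<subseteq> sets (vimage_algebra (space M) X borel)"
          using sets.sigma_sets_subset[of _ "vimage_algebra (space M) X borel"] by simp
      qed
    qed
    have iA: "integrable M (indicator A :: 'a \<Rightarrow> real)" using AM by (intro integrable_real_indicator) (auto simp: emeasure_eq_measure)
    have "(\<integral>x\<in>A. g (X x) \<partial>M) = (\<integral>x. indicator A x * g (X x) \<partial>M)"
      unfolding set_lebesgue_integral_def by simp
    also have "\<dots> = (\<integral>x. indicator A x \<partial>M) * (\<integral>x. g (X x) \<partial>M)"
      by (rule indep_var_lebesgue_integral[OF iv iA int])
    also have "\<dots> = (\<integral>x\<in>A. integral\<^sup>L M (\<lambda>\<omega>. g (X \<omega>)) \<partial>M)"
      using AM unfolding set_lebesgue_integral_def by simp
    finally show "(\<integral>x\<in>A. g (X x) \<partial>M) = (\<integral>x\<in>A. integral\<^sup>L M (\<lambda>\<omega>. g (X \<omega>)) \<partial>M)" .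
  next show "integrable M (\<lambda>\<omega>. g (X \<omega>))" by (rule int)
  next show "integrable M (\<lambda>x. integral\<^sup>L M (\<lambda>\<omega>. g (X \<omega>)))" by simp
  next show "(\<lambda>x. integral\<^sup>L M (\<lambda>\<omega>. g (X \<omega>))) \<in> borel_measurable Ft" by simp
  qed
qed

lemma nth_meas[measurable]: "(\<lambda>x::'a::real_normed_vector^'n. x $ i) \<in> borel_measurable borel"
  by (intro borel_measurable_continuous_onI continuous_intros)

lemma quad_G:
  fixes A :: "real^'n^'n" and z :: "real^'m^'n"
  shows "(\<Sum>p\<in>UNIV. inner (z $ fst p) (z $ snd p) / (norm z)^2 * A $ fst p $ snd p)
       = inner z (kron_apply A z) / (norm z)^2"
proof -
  have "inner z (kron_apply A z) = (\<Sum>i\<in>UNIV. \<Sum>j\<in>UNIV. inner (z $ i) (z $ j) * A $ i $ j)"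
    unfolding inner_kron inner_sum_right inner_scaleR_right by (simp only: mult.commute)
  also have "\<dots> = (\<Sum>p\<in>UNIV \<times> UNIV. inner (z $ fst p) (z $ snd p) * A $ fst p $ snd p)"
    by (simp only: sum.cartesian_product' fst_conv snd_conv)
  also have "(UNIV \<times> UNIV) = (UNIV :: ('n \<times> 'n) set)" by simp
  finally show ?thesis by (simp only: sum_divide_distrib times_divide_eq_left)
qed

lemma norm_mat_le: "norm (x::real^'n^'m) \<le> (\<Sum>i\<in>UNIV. \<Sum>j\<in>UNIV. \<bar>x $ i $ j\<bar>)"
proof -
  have "norm x \<le> (\<Sum>i\<in>UNIV. norm (x $ i))" by (simp add: norm_vec_def L2_set_le_sum)
  also have "\<dots> \<le> (\<Sum>i\<in>UNIV. \<Sum>j\<in>UNIV. \<bar>x $ i $ j\<bar>)" by (intro sum_mono norm_le_l1_cart)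
  finally show ?thesis .
qed

lemma G_bound:
  fixes z :: "real^'m^'n"
  shows "\<bar>inner (z $ i) (z $ j) / (norm z)^2\<bar> \<le> 1"
proof (cases "z = 0")
  case True then show ?thesis by simp
next
  case False
  have "\<bar>inner (z $ i) (z $ j)\<bar> \<le> norm (z $ i) * norm (z $ j)" by (rule Cauchy_Schwarz_ineq2)
  also have "\<dots> \<le> norm z * norm z" by (intro mult_mono Finite_Cartesian_Product.norm_nth_le) auto
  finally show ?thesis using False by (simp add: abs_div power2_eq_square divide_le_eq)
qed


theorem lemma4p4:
  fixes M :: "'a measure" and F :: "nat \<Rightarrow> 'a measure"
    and L :: "nat \<Rightarrow> 'a \<Rightarrow> real^'n^'n"
    and z :: "nat \<Rightarrow> 'a \<Rightarrow> real^'m^'n"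
    and b \<tau>2 :: real
  assumes "prob_space M"
    and filt_sub: "\<And>t. subalgebra M (F t)"
    and filt_mono: "\<And>s t. s \<le> t \<Longrightarrow> subalgebra (F t) (F s)"
    and b_pos: "b > 0" and tau_pos: "0 < \<tau>2" and tau_le: "\<tau>2 \<le> 1"
    and L_lap: "\<And>t \<omega>. \<omega> \<in> space M \<Longrightarrow> is_graph_laplacian (L t \<omega>)"
    and L_meas: "\<And>t. L t \<in> borel_measurable (F (Suc t))"
    and L_indep_past: "\<And>t. prob_space.indep_set M (sets (F t))
                               (sets (vimage_algebra (space M) (L t) borel))"
    and L_indep: "prob_space.indep_vars M (\<lambda>_. borel) L UNIV"
    and L_ident: "\<And>t. distr M borel (L t) = distr M borel (L 0)"
    and lambda2_pos: "\<And>t. lambda2 (integral\<^sup>L M (L t)) > 0"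
    and z_adapted: "\<And>t. z t \<in> borel_measurable (F t)"
    and z_perp: "\<And>t \<omega>. \<omega> \<in> space M \<Longrightarrow> z t \<omega> \<in> consensus_perp"
  shows "\<exists>(r :: nat \<Rightarrow> 'a \<Rightarrow> real) (c_r :: real).
           c_r > 0 \<and>
           (\<forall>t. r t \<in> borel_measurable (F (Suc t))) \<and>
           (\<forall>t. \<forall>\<omega>\<in>space M. r t \<omega> \<ge> 0) \<and>
           (\<forall>t. AE \<omega> in M. r t \<omega> \<le> 1) \<and>
           (\<exists>T. \<forall>t\<ge>T.
              (\<forall>\<omega>\<in>space M.
                 norm (z t \<omega> - (b / (real t + 1) powr \<tau>2) *\<^sub>R kron_apply (L t \<omega>) (z t \<omega>))
                   \<le> (1 - r t \<omega>) * norm (z t \<omega>)) \<and>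
              (AE \<omega> in M. real_cond_exp M (F t) (r t) \<omega> \<ge> c_r / (real t + 1) powr \<tau>2))"
proof -
  interpret P: prob_space M by (rule assms(1))
  have sfs: "sigma_finite_subalgebra M (F t)" for t
  proof -
    have "finite_measure_subalgebra M (F t)"
      unfolding finite_measure_subalgebra_def finite_measure_subalgebra_axioms_def
      using filt_sub P.finite_measure_axioms by auto
    then show ?thesis by (rule finite_measure_subalgebra_is_sigma_finite)
  qed
  define N where "N = real CARD('n)"
  have N1: "N \<ge> 1" by (simp add: N_def)
  have Lm[measurable]: "L t \<in> borel_measurable M" for t
    by (rule measurable_from_subalg[OF filt_sub L_meas])
  have zm[measurable]: "z t \<in> borel_measurable M" for t
    by (rule measurable_from_subalg[OF filt_sub z_adapted])
  have zF[measurable]: "z t \<in> borel_measurable (F t)" for t by (rule z_adapted)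
  have zF1[measurable]: "z t \<in> borel_measurable (F (Suc t))" for t
    by (rule measurable_from_subalg[OF filt_mono z_adapted]) simp
  have LF1[measurable]: "L t \<in> borel_measurable (F (Suc t))" for t by (rule L_meas)
  have Lb: "\<bar>L t \<omega> $ i $ j\<bar> \<le> N" if "\<omega> \<in> space M" for t \<omega> i j
    using lap_props(4)[OF L_lap[OF that]] by (simp add: N_def)
  have Lij_int: "integrable M (\<lambda>\<omega>. L t \<omega> $ i $ j)" for t i j
    by (rule P.integrable_const_bound[where B=N]) (auto intro!: AE_I2 simp: Lb)
  have L_int: "integrable M (L t)" for t
  proof (rule P.integrable_const_bound[where B="\<Sum>i\<in>(UNIV::'n set). \<Sum>j\<in>(UNIV::'n set). N"])
    show "AE x in M. norm (L t x) \<le> (\<Sum>i\<in>(UNIV::'n set). \<Sum>j\<in>(UNIV::'n set). N)"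
    proof (rule AE_I2)
      fix x assume x: "x \<in> space M"
      show "norm (L t x) \<le> (\<Sum>i\<in>(UNIV::'n set). \<Sum>j\<in>(UNIV::'n set). N)"
        by (rule order_trans[OF norm_mat_le]) (intro sum_mono Lb[OF x])
    qed
  qed simp
  have bl: "bounded_linear (\<lambda>x::real^'n^'n. x $ i $ j)" for i j
    by (rule bounded_linear_compose[OF bounded_linear_vec_nth bounded_linear_vec_nth])
  define Lbar where "Lbar = integral\<^sup>L M (L 0)"
  have idm: "(\<lambda>x::real^'n^'n. x) \<in> borel_measurable borel"
    by (rule borel_measurable_continuous_onI[OF continuous_on_id])
  have intL_eq: "integral\<^sup>L M (L t) = Lbar" for t
  proof -
    have "integral\<^sup>L (distr M borel (L t)) (\<lambda>x. x) = integral\<^sup>L M (\<lambda>\<omega>. L t \<omega>)"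
      by (rule integral_distr[OF Lm idm])
    moreover have "integral\<^sup>L (distr M borel (L 0)) (\<lambda>x. x) = integral\<^sup>L M (\<lambda>\<omega>. L 0 \<omega>)"
      by (rule integral_distr[OF Lm idm])
    ultimately show ?thesis unfolding Lbar_def using L_ident[of t] by (metis (no_types) eta_contract_eq)
  qed
  have ELt: "integral\<^sup>L M (\<lambda>\<omega>. L t \<omega> $ i $ j) = Lbar $ i $ j" for t i j
    using integral_bounded_linear[OF bl[of i j] L_int[of t]] intL_eq[of t] by simp
  have Lbar_sym: "Lbar $ i $ j = Lbar $ j $ i" for i j
  proof -
    have "integral\<^sup>L M (\<lambda>\<omega>. L 0 \<omega> $ i $ j) = integral\<^sup>L M (\<lambda>\<omega>. L 0 \<omega> $ j $ i)"
      by (rule Bochner_Integration.integral_cong) (auto intro: lap_props(1)[OF L_lap])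
    then show ?thesis using ELt[of 0] by simp
  qed
  have Lbar_rs: "(\<Sum>j\<in>UNIV. Lbar $ i $ j) = 0" for i
  proof -
    have "(\<Sum>j\<in>UNIV. Lbar $ i $ j) = (\<Sum>j\<in>UNIV. integral\<^sup>L M (\<lambda>\<omega>. L 0 \<omega> $ i $ j))"
      using ELt[of 0] by simp
    also have "\<dots> = integral\<^sup>L M (\<lambda>\<omega>. \<Sum>j\<in>UNIV. L 0 \<omega> $ i $ j)"
      using Bochner_Integration.integral_sum[of UNIV M "\<lambda>j \<omega>. L 0 \<omega> $ i $ j"] Lij_int by simp
    also have "\<dots> = integral\<^sup>L M (\<lambda>\<omega>. 0)"
      by (rule Bochner_Integration.integral_cong) (auto intro: lap_props(2)[OF L_lap])
    finally show ?thesis by simp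
  qed
  have Lbar_off: "Lbar $ i $ j \<le> 0" if "i \<noteq> j" for i j
  proof -
    have "0 \<le> integral\<^sup>L M (\<lambda>\<omega>. - L 0 \<omega> $ i $ j)"
    proof (rule integral_nonneg_AE, rule AE_I2)
      fix \<omega> assume "\<omega> \<in> space M"
      then show "0 \<le> - L 0 \<omega> $ i $ j" using lap_props(3)[OF L_lap[of \<omega> 0] that] by fastforce
    qed
    then show ?thesis using ELt[of 0 i j] by simp
  qed
  have l2: "lambda2 Lbar > 0" using lambda2_pos[of 0] by (simp add: Lbar_def)
  obtain c0 where c0: "c0 > 0"
    "\<And>w::real^'m^'n. (\<Sum>i\<in>UNIV. w $ i) = 0 \<Longrightarrow> c0 * (norm w)^2 \<le> inner w (kron_apply Lbar w)"
    using form_coercive[OF Lbar_sym Lbar_rs Lbar_off l2] by blast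
  define c where "c = min c0 1"
  have c: "c > 0" "c \<le> 1" "c \<le> c0" using c0(1) by (auto simp: c_def)
  define \<beta> where "\<beta> t = b / (real t + 1) powr \<tau>2" for t :: nat
  define T where "T = nat \<lceil>(2 * N * b) powr (1 / \<tau>2)\<rceil>"
  have b0: "\<beta> t \<ge> 0" for t using b_pos by (simp add: \<beta>_def)
  have bT: "2 * N * \<beta> t \<le> 1" if "T \<le> t" for t
  proof -
    let ?K = "2 * N * b"
    have K0: "?K > 0" using N1 b_pos by simp
    have "?K powr (1 / \<tau>2) \<le> real T" unfolding T_def by linarith
    also have "\<dots> \<le> real t + 1" using that by simp
    finally have h: "?K powr (1 / \<tau>2) \<le> real t + 1" .
    have "(?K powr (1 / \<tau>2)) powr \<tau>2 \<le> (real t + 1) powr \<tau>2"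
      by (rule powr_mono2) (use h tau_pos in auto)
    moreover have "(?K powr (1 / \<tau>2)) powr \<tau>2 = ?K"
      using tau_pos K0 by (simp add: powr_powr)
    ultimately have K: "?K \<le> (real t + 1) powr \<tau>2" by simp
    have pos: "(real t + 1) powr \<tau>2 > 0" by simp
    have "2 * N * \<beta> t = ?K / (real t + 1) powr \<tau>2" by (simp add: \<beta>_def)
    also have "\<dots> \<le> 1" using K pos by (simp add: divide_le_eq)
    finally show ?thesis .
  qed
  define G where "G t p \<omega> = inner (z t \<omega> $ fst p) (z t \<omega> $ snd p) / (norm (z t \<omega>))^2"
    for t p \<omega>
  define I0 where "I0 t \<omega> = (if z t \<omega> = 0 then 1 else 0::real)" for t \<omega>
  define r where "r t \<omega> = (if t < T then 0 else
      \<beta> t / 2 * (c * I0 t \<omega> + (\<Sum>p\<in>UNIV. G t p \<omega> * L t \<omega> $ fst p $ snd p)))" for t \<omega>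
  have rsum: "(\<Sum>p\<in>UNIV. G t p \<omega> * A $ fst p $ snd p) = inner (z t \<omega>) (kron_apply A (z t \<omega>)) / (norm (z t \<omega>))^2"
    for t \<omega> A
    unfolding G_def by (rule quad_G)
  have r_big: "r t \<omega> = \<beta> t / 2 * (c * I0 t \<omega> + inner (z t \<omega>) (kron_apply (L t \<omega>) (z t \<omega>)) / (norm (z t \<omega>))^2)"
    if "T \<le> t" for t \<omega> using that by (simp add: r_def rsum)
  have rz0: "r t \<omega> = \<beta> t / 2 * c" if "T \<le> t" "z t \<omega> = 0" for t \<omega>
    using r_big[OF that(1), of \<omega>] that(2) by (simp add: I0_def)
  have rnz: "r t \<omega> = \<beta> t / 2 * inner (z t \<omega>) (kron_apply (L t \<omega>) (z t \<omega>)) / (norm (z t \<omega>))^2"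
    if "T \<le> t" "z t \<omega> \<noteq> 0" for t \<omega>
    using r_big[OF that(1), of \<omega>] that(2) by (simp add: I0_def)
  have bh: "\<beta> t \<le> 1/2" if "T \<le> t" for t
  proof -
    have "2 * 1 * \<beta> t \<le> 2 * N * \<beta> t" using N1 b0[of t] by (intro mult_right_mono) auto
    then show ?thesis using bT[OF that] by simp
  qed
  have LC: "norm (z t \<omega> - \<beta> t *\<^sub>R kron_apply (L t \<omega>) (z t \<omega>)) \<le> (1 - r t \<omega>) * norm (z t \<omega>)
      \<and> 0 \<le> r t \<omega> \<and> r t \<omega> \<le> 1"
    if "T \<le> t" "\<omega> \<in> space M" for t \<omega>
  proof (cases "z t \<omega> = 0")
    case True
    have "\<beta> t / 2 * c \<le> 1"
    proof -
      have "\<beta> t / 2 * c \<le> (1/2) / 2 * 1" using bh[OF that(1)] b0[of t] c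
        by (intro mult_mono divide_right_mono) auto
      then show ?thesis by linarith
    qed
    moreover have "0 \<le> \<beta> t / 2 * c" using b0[of t] c by simp
    moreover have kz: "kron_apply (L t \<omega>) 0 = 0" by (simp add: kron_apply_def vec_eq_iff)
    ultimately show ?thesis using True rz0[OF that(1) True] by (simp add: kz)
  next
    case False
    have lap: "is_graph_laplacian (L t \<omega>)" by (rule L_lap[OF that(2)])
    have b1: "2 * real CARD('n) * \<beta> t \<le> 1" using bT[OF that(1)] by (simp add: N_def)
    note lc = lap_contract[OF lap b0 b1 False]
    show ?thesis using lc rnz[OF that(1) False] by simp
  qed
  show ?thesis
  proof (intro exI[of _ r] exI[of _ "b * c / 2"] conjI allI)
    show "b * c / 2 > 0" using b_pos c by simp
  next
    fix t show "r t \<in> borel_measurable (F (Suc t))"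
      unfolding r_def G_def I0_def by measurable
  next
    fix t show "\<forall>\<omega>\<in>space M. 0 \<le> r t \<omega>"
      using LC by (cases "t < T") (auto simp: r_def not_less)
  next
    fix t show "AE \<omega> in M. r t \<omega> \<le> 1"
      using LC by (intro AE_I2) (cases "t < T", auto simp: r_def not_less)
  next
    show "\<exists>T. \<forall>t\<ge>T. (\<forall>\<omega>\<in>space M.
                 norm (z t \<omega> - (b / (real t + 1) powr \<tau>2) *\<^sub>R kron_apply (L t \<omega>) (z t \<omega>))
                   \<le> (1 - r t \<omega>) * norm (z t \<omega>)) \<and>
              (AE \<omega> in M. real_cond_exp M (F t) (r t) \<omega> \<ge> b * c / 2 / (real t + 1) powr \<tau>2)"
    proof (intro exI[of _ T] allI impI conjI)
      fix t assume tT: "T \<le> t"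
      show "\<forall>\<omega>\<in>space M. norm (z t \<omega> - (b / (real t + 1) powr \<tau>2) *\<^sub>R kron_apply (L t \<omega>) (z t \<omega>))
                   \<le> (1 - r t \<omega>) * norm (z t \<omega>)"
        using LC[OF tT] by (simp add: \<beta>_def)
      show "AE \<omega> in M. real_cond_exp M (F t) (r t) \<omega> \<ge> b * c / 2 / (real t + 1) powr \<tau>2"
      proof -
        interpret S: sigma_finite_subalgebra M "F t" by (rule sfs)
        define f where "f p \<omega> = G t p \<omega> * L t \<omega> $ fst p $ snd p" for p \<omega>
        define h where "h \<omega> = c * I0 t \<omega> + (\<Sum>p\<in>UNIV. f p \<omega>)" for \<omega>
        have rt: "r t = (\<lambda>\<omega>. \<beta> t / 2 * h \<omega>)" using tT by (auto simp: r_def h_def f_def fun_eq_iff)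
        have I0F[measurable]: "I0 t \<in> borel_measurable (F t)" unfolding I0_def by measurable
        have I0m[measurable]: "I0 t \<in> borel_measurable M" unfolding I0_def by measurable
        have GF[measurable]: "G t p \<in> borel_measurable (F t)" for p unfolding G_def by measurable
        have GM[measurable]: "G t p \<in> borel_measurable M" for p unfolding G_def by measurable
        have Gb: "\<bar>G t p \<omega>\<bar> \<le> 1" for p \<omega> unfolding G_def by (rule G_bound)
        have Lijm[measurable]: "(\<lambda>\<omega>. L t \<omega> $ i $ j) \<in> borel_measurable M" for i j by measurable
        have int_f: "integrable M (f p)" for p
        proof (rule P.integrable_const_bound[where B=N])
          show "AE x in M. norm (f p x) \<le> N"
          proof (rule AE_I2)
            fix x assume x: "x \<in> space M"
            have "\<bar>G t p x\<bar> * \<bar>L t x $ fst p $ snd p\<bar> \<le> 1 * N"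
              using Gb Lb[OF x] by (intro mult_mono) auto
            then show "norm (f p x) \<le> N" by (simp add: f_def abs_mult)
          qed
          show "f p \<in> borel_measurable M" unfolding f_def by measurable
        qed
        have int_cI0: "integrable M (\<lambda>\<omega>. c * I0 t \<omega>)"
          by (rule P.integrable_const_bound[where B=c]) (auto intro!: AE_I2 simp: I0_def c(1) less_imp_le)
        have int_sum: "integrable M (\<lambda>\<omega>. \<Sum>p\<in>UNIV. f p \<omega>)" using int_f by auto
        have int_h: "integrable M h" unfolding h_def using int_cI0 int_sum by auto
        have A1: "AE \<omega> in M. real_cond_exp M (F t) (r t) \<omega> = \<beta> t / 2 * real_cond_exp M (F t) h \<omega>"
          unfolding rt by (rule S.real_cond_exp_cmult[OF int_h])
        have A2: "AE \<omega> in M. real_cond_exp M (F t) h \<omega> = real_cond_exp M (F t) (\<lambda>\<omega>. c * I0 t \<omega>) \<omega>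
              + real_cond_exp M (F t) (\<lambda>\<omega>. \<Sum>p\<in>UNIV. f p \<omega>) \<omega>"
          using S.real_cond_exp_add[OF int_cI0 int_sum] unfolding h_def by simp
        have A3: "AE \<omega> in M. real_cond_exp M (F t) (\<lambda>\<omega>. c * I0 t \<omega>) \<omega> = c * I0 t \<omega>"
          by (rule S.real_cond_exp_F_meas[OF int_cI0]) measurable
        have A4: "AE \<omega> in M. real_cond_exp M (F t) (\<lambda>\<omega>. \<Sum>p\<in>UNIV. f p \<omega>) \<omega> = (\<Sum>p\<in>UNIV. real_cond_exp M (F t) (f p) \<omega>)"
          by (rule S.real_cond_exp_sum[OF int_f])
        have A5: "AE \<omega> in M. \<forall>p\<in>UNIV. real_cond_exp M (F t) (f p) \<omega>
              = G t p \<omega> * real_cond_exp M (F t) (\<lambda>\<omega>. L t \<omega> $ fst p $ snd p) \<omega>"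
        proof (rule AE_finite_allI, simp)
          fix p :: "'n \<times> 'n"
          show "AE \<omega> in M. real_cond_exp M (F t) (f p) \<omega>
              = G t p \<omega> * real_cond_exp M (F t) (\<lambda>\<omega>. L t \<omega> $ fst p $ snd p) \<omega>"
            using S.real_cond_exp_mult[OF GF Lijm, of p "fst p" "snd p"] int_f[of p]
            unfolding f_def by simp
        qed
        have A6: "AE \<omega> in M. \<forall>p\<in>UNIV. real_cond_exp M (F t) (\<lambda>\<omega>. L t \<omega> $ fst p $ snd p) \<omega>
              = Lbar $ fst p $ snd p"
        proof (rule AE_finite_allI, simp)
          fix p :: "'n \<times> 'n"
          show "AE \<omega> in M. real_cond_exp M (F t) (\<lambda>\<omega>. L t \<omega> $ fst p $ snd p) \<omega> = Lbar $ fst p $ snd p"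
            using indep_cond_exp[OF assms(1) filt_sub L_indep_past Lm nth2_meas Lij_int] ELt by simp
        qed
        show ?thesis using A1 A2 A3 A4 A5 A6 AE_space
        proof eventually_elim
          case (elim \<omega>)
          have "real_cond_exp M (F t) (r t) \<omega>
              = \<beta> t / 2 * (c * I0 t \<omega> + (\<Sum>p\<in>UNIV. G t p \<omega> * Lbar $ fst p $ snd p))"
            using elim by simp
          also have "\<dots> = \<beta> t / 2 * (c * I0 t \<omega> + inner (z t \<omega>) (kron_apply Lbar (z t \<omega>)) / (norm (z t \<omega>))^2)"
            by (simp only: rsum)
          also have "\<dots> \<ge> \<beta> t / 2 * c"
          proof (cases "z t \<omega> = 0")
            case True then show ?thesis by (simp add: I0_def)
          next
            case False
            have "c0 * (norm (z t \<omega>))^2 \<le> inner (z t \<omega>) (kron_apply Lbar (z t \<omega>))"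
              by (rule c0(2)[OF perp_sum[OF z_perp[OF elim(7)]]])
            then have "c0 \<le> inner (z t \<omega>) (kron_apply Lbar (z t \<omega>)) / (norm (z t \<omega>))^2"
              using False by (simp add: pos_le_divide_eq)
            then have "c \<le> c * I0 t \<omega> + inner (z t \<omega>) (kron_apply Lbar (z t \<omega>)) / (norm (z t \<omega>))^2"
              using False c(3) by (simp add: I0_def)
            then show ?thesis using b0[of t] by (intro mult_left_mono) auto
          qed
          finally have "\<beta> t / 2 * c \<le> real_cond_exp M (F t) (r t) \<omega>" .
          moreover have "\<beta> t / 2 * c = b * c / 2 / (real t + 1) powr \<tau>2" by (simp add: \<beta>_def)
          ultimately show ?case by simp
        qed
      qed
    qed
  qed
qed

end
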